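(* Let $\alpha=(\alpha_1,\dots,\alpha_n)$ be a composition, $k\ge 0$ an integer, and $\lambda$ a partition with $\lambda_1-k\le n$. Let $\mathcal{T}$ be a semistandard Young tableau of shape $\mathcal{S}(\lambda,\alpha;k)$ whose reading word is lattice. Then every entry in the first row of the foundation $\lambda$ of $\mathcal{T}$ belongs to the set \[R_{\alpha,k}=\Big\{1+\sum_{i=1}^{j}\alpha_{n+1-i}\ :\ j=1,2,\dots,n\Big\}\cup\begin{cases}\{1\}&\text{if }k>0,\\ \emptyset&\text{if }k=0.\end{cases}\] Furthermore, the value $1$ occurs at most $k$ times in that row, and every other value occurs at most once in that row.
   Context: Diagrams use English convention: boxes $(r,c)$ with row index $r$ increasing downward and column index $c$ increasing rightward. For a composition $\alpha=(\alpha_1,\dots,\alpha_n)$ (positive parts), $|\alpha|=\sum_i\alpha_i$, and $\Delta_\alpha$ is the $180^\circ$ rotation of the Ferrers diagram of the partition $(n^{\alpha_n},(n-1)^{\alpha_{n-1}},\dots,1^{\alpha_1})$; concretely $\Delta_\alpha$ occupies rows $1,\dots,|\alpha|$, each row right-justified ending in column $n$, row lengths weakly increasing downward, with exactly $\alpha_i$ rows of length $i$. For $k\ge0$ and a partition $\lambda$ with $\lambda_1-k\le n$, $\mathcal{S}(\lambda,\alpha;k)$ (a "fat staircase with bad foundation") is the diagram consisting of $\Delta_\alpha$ together with a copy of the Ferrers diagram of $\lambda$ (the foundation) placed so that row $r$ of $\lambda$ occupies row $|\alpha|+r$, columns $1-k$ through $\lambda_r-k$; i.e. the first row of $\lambda$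 starts one row below and $k$ columns to the left of the bottom-left box of $\Delta_\alpha$. A tableau is a filling of the boxes with positive integers; it is semistandard (SSYT) if rows weakly increase left to right and columns strictly increase top to bottom. The reading word reads rows right to left, from the top row to the bottom row. A sequence is lattice if, for every $j\ge1$ and every initial segment, the number of $j$'s is at least the number of $(j+1)$'s. *)

theory Defs
  imports Main "HOL-Library.Product_Lexorder"
begin

(* Cells are pairs (row, column) of integers, English convention. *)
type_synonym cell = "int \<times> int"

definition is_composition :: "nat list \<Rightarrow> bool" where
  "is_composition \<alpha> \<longleftrightarrow> (\<forall>a\<in>set \<alpha>. 0 < a)"

definition is_partition :: "nat list \<Rightarrow> bool" where
  "is_partition lam \<longleftrightarrow> sorted (rev lam) \<and> (\<forall>x\<in>set lam. 0 < x)"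

definition stair_row_lengths :: "nat list \<Rightarrow> nat list" where
  "stair_row_lengths \<alpha> = concat (map (\<lambda>i. replicate (\<alpha> ! (i - 1)) i) [1..<length \<alpha> + 1])"

definition Delta :: "nat list \<Rightarrow> cell set" where
  "Delta \<alpha> = {(r, c). 1 \<le> r \<and> r \<le> int (sum_list \<alpha>) \<and> c \<le> int (length \<alpha>)
       \<and> int (length \<alpha>) + 1 - int (stair_row_lengths \<alpha> ! nat (r - 1)) \<le> c}"

definition foundation :: "nat list \<Rightarrow> nat list \<Rightarrow> nat \<Rightarrow> cell set" where
  "foundation lam \<alpha> k = {(r, c). 1 \<le> r - int (sum_list \<alpha>) \<and> r - int (sum_list \<alpha>) \<le> int (length lam)
       \<and> 1 - int k \<le> c \<and> c \<le> int (lam ! nat (r - int (sum_list \<alpha>) - 1)) - int k}"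

definition fat_staircase :: "nat list \<Rightarrow> nat list \<Rightarrow> nat \<Rightarrow> cell set" where
  "fat_staircase lam \<alpha> k = Delta \<alpha> \<union> foundation lam \<alpha> k"

definition is_SSYT :: "cell set \<Rightarrow> (cell \<Rightarrow> nat) \<Rightarrow> bool" where
  "is_SSYT D T \<longleftrightarrow>
     (\<forall>x\<in>D. 0 < T x) \<and>
     (\<forall>r c c'. (r, c) \<in> D \<and> (r, c') \<in> D \<and> c < c' \<longrightarrow> T (r, c) \<le> T (r, c')) \<and>
     (\<forall>r r' c. (r, c) \<in> D \<and> (r', c) \<in> D \<and> r < r' \<longrightarrow> T (r, c) < T (r', c))"

(* reading word: rows top to bottom, each row read right to left *)
definition reading_word :: "cell set \<Rightarrow> (cell \<Rightarrow> nat) \<Rightarrow> nat list" where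
  "reading_word D T = map (\<lambda>(r, c'). T (r, - c')) (sorted_list_of_set ((\<lambda>(r, c). (r, - c)) ` D))"

definition is_lattice :: "nat list \<Rightarrow> bool" where
  "is_lattice w \<longleftrightarrow> (\<forall>m \<le> length w. \<forall>j \<ge> 1.
      count_list (take m w) (Suc j) \<le> count_list (take m w) j)"

definition R_set :: "nat list \<Rightarrow> nat \<Rightarrow> nat set" where
  "R_set \<alpha> k = {1 + (\<Sum>i=1..j. \<alpha> ! (length \<alpha> - i)) | j. 1 \<le> j \<and> j \<le> length \<alpha>}
                \<union> (if k > 0 then {1} else {})"

end

theory Submission
  imports Defs
begin


lemma sorted_takeWhile_filter:
  "sorted xs \<Longrightarrow> takeWhile (\<lambda>z. z \<le> (a::'a::linorder)) xs = filter (\<lambda>z. z \<le> a) xs"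
proof (induction xs)
  case (Cons b xs)
  then show ?case
  proof (cases "b \<le> a")
    case False
    then have "\<forall>x\<in>set xs. \<not> x \<le> a" using Cons.prems by (auto intro: order.trans)
    then show ?thesis using False by (simp add: filter_empty_conv)
  qed (use Cons in simp)
qed simp

definition key :: "cell \<Rightarrow> cell" where "key x = (fst x, - snd x)"

lemma inj_key: "inj key" unfolding key_def inj_def by auto

lemma lattice_card:
  assumes fin: "finite D" and lat: "is_lattice (reading_word D T)" and j: "1 \<le> j"
  shows "card {y\<in>D. key y \<le> a \<and> T y = Suc j} \<le> card {y\<in>D. key y \<le> a \<and> T y = j}"
proof -
  define L where "L = sorted_list_of_set (key ` D)"
  define g where "g = (\<lambda>(r, c'). T (r, - c'))"
  have gk: "g (key y) = T y" for y unfolding g_def key_def by (cases y) auto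
  have kk: "(\<lambda>(r::int, c::int). (r, -c)) = key" by (auto simp: key_def fun_eq_iff)
  have w: "reading_word D T = map g L" unfolding reading_word_def L_def g_def kk ..
  define m where "m = length (takeWhile (\<lambda>z. z \<le> a) L)"
  have tk: "take m L = filter (\<lambda>z. z \<le> a) L"
    unfolding m_def by (metis sorted_takeWhile_filter takeWhile_eq_take L_def sorted_sorted_list_of_set)
  have dist: "distinct L" unfolding L_def by simp
  have setL: "set L = key ` D" unfolding L_def using fin by simp
  have cnt: "count_list (take m (map g L)) v = card {y\<in>D. key y \<le> a \<and> T y = v}" for v
  proof -
    have "count_list (take m (map g L)) v = length (filter (\<lambda>z. g z = v) (filter (\<lambda>z. z \<le> a) L))"
      by (simp add: count_list_eq_length_filter take_map tk filter_map comp_def eq_commute)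
    also have "\<dots> = card (set (filter (\<lambda>z. g z = v) (filter (\<lambda>z. z \<le> a) L)))"
      using dist by (metis distinct_card distinct_filter)
    also have "set (filter (\<lambda>z. g z = v) (filter (\<lambda>z. z \<le> a) L)) = key ` {y\<in>D. key y \<le> a \<and> T y = v}"
      using setL gk by auto
    also have "card \<dots> = card {y\<in>D. key y \<le> a \<and> T y = v}"
      using inj_key by (simp add: card_image inj_on_subset)
    finally show ?thesis .
  qed
  have "m \<le> length (reading_word D T)" unfolding w m_def by (simp add: length_takeWhile_le)
  with lat j have "count_list (take m (reading_word D T)) (Suc j) \<le> count_list (take m (reading_word D T)) j"
    unfolding is_lattice_def by blast
  then show ?thesis using cnt w by simp
qed


lemma srl_snoc: "stair_row_lengths (\<alpha> @ [a]) = stair_row_lengths \<alpha> @ replicate a (length \<alpha> + 1)"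
proof -
  have u: "[1..<length (\<alpha>@[a]) + 1] = [1..<length \<alpha> + 1] @ [length \<alpha> + 1]" by simp
  have m: "map (\<lambda>i. replicate ((\<alpha>@[a]) ! (i - 1)) i) [1..<length \<alpha> + 1]
         = map (\<lambda>i. replicate (\<alpha> ! (i - 1)) i) [1..<length \<alpha> + 1]"
    by (rule map_cong) (auto simp: nth_append)
  have "stair_row_lengths (\<alpha> @ [a]) = concat (map (\<lambda>i. replicate ((\<alpha>@[a]) ! (i - 1)) i) ([1..<length \<alpha> + 1] @ [length \<alpha> + 1]))"
    unfolding stair_row_lengths_def u ..
  also have "\<dots> = concat (map (\<lambda>i. replicate ((\<alpha>@[a]) ! (i - 1)) i) [1..<length \<alpha> + 1]) @ replicate a (length \<alpha> + 1)"
    by simp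
  finally show ?thesis unfolding m stair_row_lengths_def .
qed

lemma srl_nil: "stair_row_lengths [] = []" by (simp add: stair_row_lengths_def)

lemma srl_length: "length (stair_row_lengths \<alpha>) = sum_list \<alpha>"
  by (induction \<alpha> rule: rev_induct) (auto simp: srl_nil srl_snoc)

lemma srl_nth:
  "p < sum_list \<alpha> \<Longrightarrow> 1 \<le> m \<Longrightarrow> (m \<le> stair_row_lengths \<alpha> ! p) \<longleftrightarrow> (sum_list (take (m - 1) \<alpha>) \<le> p)"
proof (induction \<alpha> arbitrary: p m rule: rev_induct)
  case Nil then show ?case by simp
next
  case (snoc a \<alpha>)
  show ?case
  proof (cases "p < sum_list \<alpha>")
    case True
    have e: "stair_row_lengths (\<alpha> @ [a]) ! p = stair_row_lengths \<alpha> ! p"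
      using True by (simp add: srl_snoc nth_append srl_length)
    show ?thesis
    proof (cases "m - 1 \<le> length \<alpha>")
      case True
      then show ?thesis using snoc.IH[of p m] snoc.prems \<open>p < sum_list \<alpha>\<close> e by simp
    next
      case False
      then have "\<not> length \<alpha> + 1 \<le> stair_row_lengths \<alpha> ! p"
        using snoc.IH[of p "length \<alpha> + 1"] \<open>p < sum_list \<alpha>\<close> by simp
      then show ?thesis using False e snoc.prems by simp
    qed
  next
    case False
    have e: "stair_row_lengths (\<alpha> @ [a]) ! p = length \<alpha> + 1"
      using False snoc.prems by (simp add: srl_snoc nth_append srl_length)
    show ?thesis
    proof (cases "m - 1 \<le> length \<alpha>")
      case True
      have "sum_list (take (m - 1) \<alpha>) \<le> sum_list \<alpha>"
        by (metis append_take_drop_id le_add1 sum_list_append)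
      then show ?thesis using True e False snoc.prems by simp
    next
      case False
      then show ?thesis using e snoc.prems by simp
    qed
  qed
qed

definition bb :: "nat list \<Rightarrow> int \<Rightarrow> int" where
  "bb \<alpha> c = int (sum_list (take (length \<alpha> - nat c) \<alpha>))"

lemma Delta_iff:
  "((r, c) \<in> Delta \<alpha>) \<longleftrightarrow> 1 \<le> c \<and> c \<le> int (length \<alpha>) \<and> bb \<alpha> c < r \<and> r \<le> int (sum_list \<alpha>)"
proof (cases "1 \<le> r \<and> r \<le> int (sum_list \<alpha>) \<and> c \<le> int (length \<alpha>)")
  case True
  define p where "p = nat (r - 1)"
  have "r - 1 < int (sum_list \<alpha>)" using True by simp
  then have p: "p < sum_list \<alpha>" using True unfolding p_def by (simp add: nat_less_iff)
  define m where "m = nat (int (length \<alpha>) + 1 - c)"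
  have m1: "1 \<le> m" using True unfolding m_def by linarith
  have "((r, c) \<in> Delta \<alpha>) \<longleftrightarrow> m \<le> stair_row_lengths \<alpha> ! p"
    using True unfolding Delta_def p_def m_def by auto
  also have "\<dots> \<longleftrightarrow> sum_list (take (m - 1) \<alpha>) \<le> p" using srl_nth[OF p m1] .
  also have "\<dots> \<longleftrightarrow> 1 \<le> c \<and> bb \<alpha> c < r"
  proof (cases "1 \<le> c")
    case True
    then have "m - 1 = length \<alpha> - nat c" unfolding m_def by simp
    then show ?thesis using True \<open>1 \<le> r \<and> _\<close> unfolding bb_def p_def by auto
  next
    case False
    then have "m - 1 \<ge> length \<alpha>" unfolding m_def by simp
    then show ?thesis using False p by simp
  qed
  finally show ?thesis using True by auto
next
  case False
  have "0 \<le> bb \<alpha> c" by (simp add: bb_def)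
  then show ?thesis using False unfolding Delta_def by auto
qed



lemma sum_take_mono: "i \<le> j \<Longrightarrow> sum_list (take i xs) \<le> sum_list (take (j::nat) (xs::nat list))"
  by (metis le_add1 le_add_diff_inverse sum_list_append take_add)

lemma sum_take_strict:
  assumes "i < j" "j \<le> length xs" "\<forall>a\<in>set xs. 0 < (a::nat)"
  shows "sum_list (take i xs) < sum_list (take j xs)"
proof -
  have tj: "take j xs = take i xs @ take (j - i) (drop i xs)"
    using assms(1) by (metis le_add_diff_inverse less_imp_le take_add)
  have "drop i xs \<noteq> []" using assms by simp
  then obtain z zs where zz: "take (j - i) (drop i xs) = z # zs"
    using assms(1) by (cases "drop i xs") (auto simp: take_Cons')
  have "z \<in> set xs" using zz by (metis in_set_dropD in_set_takeD list.set_intros(1))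
  then have "0 < z" using assms(3) by auto
  then show ?thesis using tj zz by simp
qed

lemma bb_antimono: "c \<le> c' \<Longrightarrow> 1 \<le> c \<Longrightarrow> bb \<alpha> c' \<le> bb \<alpha> c"
  unfolding bb_def by (simp add: sum_take_mono diff_le_mono2 nat_mono)

lemma bb_strict: "c < c' \<Longrightarrow> 1 \<le> c \<Longrightarrow> c' \<le> int (length \<alpha>) \<Longrightarrow> is_composition \<alpha> \<Longrightarrow> bb \<alpha> c' < bb \<alpha> c"
  unfolding bb_def is_composition_def
  using sum_take_strict[of "length \<alpha> - nat c'" "length \<alpha> - nat c" \<alpha>] by auto

definition mu :: "nat \<Rightarrow> cell \<Rightarrow> nat" where "mu n x = nat (fst x * (int n + 1) - snd x)"

lemma mu_less:
  assumes "1 \<le> c'" "c \<le> int n" "1 \<le> r" "r' < r \<or> (r' = r \<and> c < c')"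
  shows "mu n (r', c') < mu n (r, c)"
proof -
  have "r * (int n + 1) \<ge> 1 * (int n + 1)" using assms(3) by (intro mult_right_mono) auto
  moreover have "r' < r \<Longrightarrow> r' * (int n + 1) \<le> (r - 1) * (int n + 1)" by (intro mult_right_mono) auto
  ultimately show ?thesis using assms unfolding mu_def by (auto simp: algebra_simps)
qed

lemma key_le: "key (r', c') \<le> key (r, c) \<longleftrightarrow> r' < r \<or> (r' = r \<and> c \<le> c')"
  by (auto simp: key_def less_eq_prod_simp)

lemma filling:
  fixes \<alpha> :: "nat list" and D :: "cell set" and T :: "cell \<Rightarrow> nat"
  assumes fin: "finite D" and sub: "Delta \<alpha> \<subseteq> D"
    and low: "\<And>x. x \<in> D \<Longrightarrow> fst x \<le> int (sum_list \<alpha>) \<Longrightarrow> x \<in> Delta \<alpha>"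
    and ssyt: "is_SSYT D T" and lat: "is_lattice (reading_word D T)"
  shows "x \<in> Delta \<alpha> \<Longrightarrow> int (T x) = fst x - bb \<alpha> (snd x)"
proof (induction x rule: measure_induct_rule[of "mu (length \<alpha>)"])
  case (less x)
  obtain r c where x: "x = (r, c)" by (cases x)
  have xD: "(r, c) \<in> Delta \<alpha>" using less.prems x by simp
  note xi = xD[unfolded Delta_iff]
  have IH: "int (T (r', c')) = r' - bb \<alpha> c'"
    if "(r', c') \<in> Delta \<alpha>" "r' < r \<or> (r' = r \<and> c < c')" for r' c'
  proof -
    have "1 \<le> c'" using that(1) by (simp add: Delta_iff)
    moreover have "0 \<le> bb \<alpha> c" by (simp add: bb_def)
    ultimately have "mu (length \<alpha>) (r', c') < mu (length \<alpha>) (r, c)"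
      using that xi by (intro mu_less) auto
    then have "mu (length \<alpha>) (r', c') < mu (length \<alpha>) x" using x by simp
    then show ?thesis using less.IH that by fastforce
  qed
  have pos: "0 < T y" if "y \<in> D" for y using ssyt that unfolding is_SSYT_def by blast
  have rowm: "T (r1, c1) \<le> T (r1, c2)" if "(r1, c1) \<in> D" "(r1, c2) \<in> D" "c1 < c2" for r1 c1 c2
    using ssyt that unfolding is_SSYT_def by blast
  have colm: "T (r1, c1) < T (r2, c1)" if "(r1, c1) \<in> D" "(r2, c1) \<in> D" "r1 < r2" for r1 r2 c1
    using ssyt that unfolding is_SSYT_def by blast
  have lower: "int (T (r, c)) \<ge> r - bb \<alpha> c"
  proof (cases "r - bb \<alpha> c \<ge> 2")
    case True
    then have "(r - 1, c) \<in> Delta \<alpha>" using xi by (simp add: Delta_iff)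
    then have "int (T (r - 1, c)) = r - 1 - bb \<alpha> c" using IH by simp
    moreover have "T (r - 1, c) < T (r, c)" using colm[of "r - 1" c r] \<open>(r - 1, c) \<in> Delta \<alpha>\<close> xD sub by auto
    ultimately show ?thesis by simp
  next
    case False
    then show ?thesis using pos xD sub by force
  qed
  have upper: "int (T (r, c)) \<le> r - bb \<alpha> c"
  proof (rule ccontr)
    assume "\<not> ?thesis"
    define v where "v = T (r, c)"
    have vgt: "int v > r - bb \<alpha> c" using \<open>\<not> _\<close> v_def by simp
    then have v2: "v \<ge> 2" using xi by simp
    define j where "j = v - 1"
    have j1: "1 \<le> j" and vj: "v = Suc j" using v2 unfolding j_def by auto
    define A where "A = {y\<in>D. key y \<le> key (r, c) \<and> T y = j}"
    define B where "B = {y\<in>D. key y \<le> key (r, c) \<and> T y = Suc j}"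
    have cardAB: "card B \<le> card A" unfolding A_def B_def by (rule lattice_card[OF fin lat j1])
    define f where "f = (\<lambda>y::cell. (fst y + 1, snd y))"
    have injf: "inj f" unfolding f_def inj_def by auto
    have fA: "f ` A \<subseteq> B - {(r, c)}"
    proof
      fix z assume "z \<in> f ` A"
      then obtain r' c' where y: "(r', c') \<in> A" and z: "z = (r' + 1, c')" unfolding f_def by auto
      have yD: "(r', c') \<in> D" and ky: "key (r', c') \<le> key (r, c)" and Ty: "T (r', c') = j"
        using y unfolding A_def by auto
      have rr: "r' < r \<or> (r' = r \<and> c \<le> c')" using ky key_le by blast
      have yDelta: "(r', c') \<in> Delta \<alpha>" using low[OF yD] rr xi by auto
      have "c' \<noteq> c \<or> r' \<noteq> r" using Ty vj v_def by auto
      then have rr2: "r' < r \<or> (r' = r \<and> c < c')" using rr by auto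
      have Ty2: "int j = r' - bb \<alpha> c'" using IH[OF yDelta rr2] Ty by simp
      have "r' < r"
      proof (rule ccontr)
        assume "\<not> r' < r"
        then have "r' = r" "c < c'" using rr2 by auto
        then have "T (r, c) \<le> T (r, c')" using rowm xD yDelta sub by auto
        then show False using Ty v_def vj \<open>r' = r\<close> by simp
      qed
      have yi: "1 \<le> c' \<and> c' \<le> int (length \<alpha>) \<and> bb \<alpha> c' < r'" using yDelta by (simp add: Delta_iff)
      have zDelta: "(r' + 1, c') \<in> Delta \<alpha>" using yi \<open>r' < r\<close> xi by (simp add: Delta_iff)
      have zpos: "r' + 1 < r \<or> (r' + 1 = r \<and> c < c')"
      proof (cases "r' + 1 = r")
        case True
        have "bb \<alpha> c' < bb \<alpha> c" using Ty2 vgt vj True by simp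
        then have "c < c'" using bb_antimono[of c' c \<alpha>] yi by (cases "c' \<le> c") auto
        then show ?thesis using True by simp
      qed (use \<open>r' < r\<close> in simp)
      have Tz: "int (T (r' + 1, c')) = r' + 1 - bb \<alpha> c'" using IH[OF zDelta zpos] .
      have "T (r' + 1, c') = Suc j" using Tz Ty2 by simp
      moreover have "key (r' + 1, c') \<le> key (r, c)" using zpos key_le by auto
      moreover have "(r' + 1, c') \<noteq> (r, c)" using zpos by auto
      ultimately show "z \<in> B - {(r, c)}" using zDelta sub z unfolding B_def by auto
    qed
    have finB: "finite B" unfolding B_def using fin by simp
    have "card A = card (f ` A)" using injf by (simp add: card_image inj_on_subset)
    also have "\<dots> \<le> card (B - {(r, c)})" using fA finB by (intro card_mono) auto
    also have "\<dots> < card B"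
    proof -
      have "(r, c) \<in> B" unfolding B_def using xD sub vj v_def by (auto simp: key_le)
      then show ?thesis using finB by (meson card_Diff1_less)
    qed
    finally show False using cardAB by simp
  qed
  show ?case using lower upper x by simp
qed



lemma sum_drop_R: "j \<le> length xs \<Longrightarrow> (\<Sum>i=1..j. xs ! (length xs - i)) = sum_list (drop (length xs - j) xs)"
proof (induction j)
  case 0 then show ?case by simp
next
  case (Suc j)
  have "drop (length xs - Suc j) xs = xs ! (length xs - Suc j) # drop (length xs - j) xs"
  proof -
    have "Suc (length xs - Suc j) = length xs - j" using Suc.prems by simp
    then show ?thesis using Cons_nth_drop_Suc[of "length xs - Suc j" xs] Suc.prems by simp
  qed
  then show ?case using Suc by (simp add: add.commute)
qed

lemma finite_fat: "finite (fat_staircase lam \<alpha> k)"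
proof -
  have s1: "Delta \<alpha> \<subseteq> {1..int (sum_list \<alpha>)} \<times> {1..int (length \<alpha>)}"
  proof
    fix x assume "x \<in> Delta \<alpha>"
    moreover have "0 \<le> bb \<alpha> (snd x)" by (simp add: bb_def)
    ultimately show "x \<in> {1..int (sum_list \<alpha>)} \<times> {1..int (length \<alpha>)}" by (cases x) (auto simp: Delta_iff)
  qed
  have s2: "foundation lam \<alpha> k \<subseteq> {int (sum_list \<alpha>) + 1 .. int (sum_list \<alpha>) + int (length lam)}
       \<times> {1 - int k .. int (sum_list lam) - int k}"
  proof
    fix x assume "x \<in> foundation lam \<alpha> k"
    then obtain r c where x: "x = (r, c)" and h: "1 \<le> r - int (sum_list \<alpha>)" "r - int (sum_list \<alpha>) \<le> int (length lam)"
      "1 - int k \<le> c" "c \<le> int (lam ! nat (r - int (sum_list \<alpha>) - 1)) - int k"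
      unfolding foundation_def by auto
    have "nat (r - int (sum_list \<alpha>) - 1) < length lam" using h by linarith
    then have "lam ! nat (r - int (sum_list \<alpha>) - 1) \<le> sum_list lam" by (simp add: elem_le_sum_list)
    then show "x \<in> {int (sum_list \<alpha>) + 1 .. int (sum_list \<alpha>) + int (length lam)}
       \<times> {1 - int k .. int (sum_list lam) - int k}" using h x by simp
  qed
  have f1: "finite (Delta \<alpha>)" by (rule finite_subset[OF s1]) simp
  have f2: "finite (foundation lam \<alpha> k)" by (rule finite_subset[OF s2]) simp
  show ?thesis unfolding fat_staircase_def using f1 f2 by simp
qed

lemma found_row: "(r, c) \<in> foundation lam \<alpha> k \<Longrightarrow> r \<ge> int (sum_list \<alpha>) + 1"
  unfolding foundation_def by auto

lemma found_row1: "((int (sum_list \<alpha>) + 1, c) \<in> foundation lam \<alpha> k) \<longleftrightarrow>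
   lam \<noteq> [] \<and> 1 - int k \<le> c \<and> c \<le> int (lam ! 0) - int k"
  unfolding foundation_def by (auto simp: Suc_le_eq)



theorem mainTheorem1:
  fixes \<alpha> lam :: "nat list" and k :: nat and T :: "int \<times> int \<Rightarrow> nat"
  assumes "is_composition \<alpha>"
    and "is_partition lam"
    and "lam \<noteq> [] \<longrightarrow> int (lam ! 0) - int k \<le> int (length \<alpha>)"
    and "is_SSYT (fat_staircase lam \<alpha> k) T"
    and "is_lattice (reading_word (fat_staircase lam \<alpha> k) T)"
  shows "(\<forall>c. (int (sum_list \<alpha>) + 1, c) \<in> foundation lam \<alpha> k
              \<longrightarrow> T (int (sum_list \<alpha>) + 1, c) \<in> R_set \<alpha> k)
       \<and> card {c. (int (sum_list \<alpha>) + 1, c) \<in> foundation lam \<alpha> k \<and> T (int (sum_list \<alpha>) + 1, c) = 1} \<le> k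
       \<and> (\<forall>v. v \<noteq> 1 \<longrightarrow>
            card {c. (int (sum_list \<alpha>) + 1, c) \<in> foundation lam \<alpha> k \<and> T (int (sum_list \<alpha>) + 1, c) = v} \<le> 1)"
proof -
  note comp = assms(1) and bound = assms(3) and ssyt = assms(4) and lat = assms(5)
  define D where "D = fat_staircase lam \<alpha> k"
  define N where "N = sum_list \<alpha>"
  define n where "n = length \<alpha>"
  define R0 where "R0 = int N + 1"
  define F where "F = foundation lam \<alpha> k"
  have fin: "finite D" unfolding D_def by (rule finite_fat)
  have DF: "D = Delta \<alpha> \<union> F" unfolding D_def F_def fat_staircase_def ..
  have sub: "Delta \<alpha> \<subseteq> D" using DF by auto
  have FD: "F \<subseteq> D" using DF by auto
  have DeltaN: "fst x \<le> int N" if "x \<in> Delta \<alpha>" for x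
    using that by (cases x) (auto simp: Delta_iff N_def)
  have FN: "fst x \<ge> R0" if "x \<in> F" for x
    using that found_row unfolding F_def R0_def N_def by (cases x) auto
  have low: "x \<in> Delta \<alpha>" if "x \<in> D" "fst x \<le> int (sum_list \<alpha>)" for x
    using that DF FN unfolding R0_def N_def by fastforce
  have ssyt': "is_SSYT D T" using ssyt D_def by simp
  have lat': "is_lattice (reading_word D T)" using lat D_def by simp
  have fill: "int (T x) = fst x - bb \<alpha> (snd x)" if "x \<in> Delta \<alpha>" for x
    using filling[OF fin sub low ssyt' lat' that] .
  have pos: "0 < T y" if "y \<in> D" for y using ssyt' that unfolding is_SSYT_def by blast
  have rowm: "T (r1, c1) \<le> T (r1, c2)" if "(r1, c1) \<in> D" "(r1, c2) \<in> D" "c1 < c2" for r1 c1 c2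
    using ssyt' that unfolding is_SSYT_def by blast
  have colm: "T (r1, c1) < T (r2, c1)" if "(r1, c1) \<in> D" "(r2, c1) \<in> D" "r1 < r2" for r1 r2 c1
    using ssyt' that unfolding is_SSYT_def by blast
  have Frow: "(R0, c) \<in> F \<longleftrightarrow> lam \<noteq> [] \<and> 1 - int k \<le> c \<and> c \<le> int (lam ! 0) - int k" for c
    unfolding F_def R0_def N_def by (rule found_row1)

  define Dc where "Dc u = {y \<in> Delta \<alpha>. T y = u}" for u
  define C where "C u = {c. 1 \<le> c \<and> c \<le> int n \<and> bb \<alpha> c + int u \<le> int N}" for u
  have finC: "finite (C u)" for u
    by (rule finite_subset[of _ "{1..int n}"]) (auto simp: C_def)
  have cardDC: "card (Dc u) = card (C u)" if "1 \<le> u" for u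
  proof -
    have "Dc u = (\<lambda>c. (bb \<alpha> c + int u, c)) ` C u"
    proof
      show "Dc u \<subseteq> (\<lambda>c. (bb \<alpha> c + int u, c)) ` C u"
      proof
        fix y assume y: "y \<in> Dc u"
        obtain r c where yrc: "y = (r, c)" by (cases y)
        have yD: "(r, c) \<in> Delta \<alpha>" and Ty: "T (r, c) = u" using y yrc unfolding Dc_def by auto
        have "int u = r - bb \<alpha> c" using fill[OF yD] Ty by simp
        moreover have "c \<in> C u" using yD \<open>int u = r - bb \<alpha> c\<close>
          unfolding C_def by (auto simp: Delta_iff n_def N_def)
        ultimately show "y \<in> (\<lambda>c. (bb \<alpha> c + int u, c)) ` C u" using yrc
          by (intro image_eqI[of _ _ c]) auto
      qed
    next
      show "(\<lambda>c. (bb \<alpha> c + int u, c)) ` C u \<subseteq> Dc u"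
      proof
        fix y assume "y \<in> (\<lambda>c. (bb \<alpha> c + int u, c)) ` C u"
        then obtain c where c: "c \<in> C u" and y: "y = (bb \<alpha> c + int u, c)" by auto
        have yD: "y \<in> Delta \<alpha>" using c y that unfolding C_def by (auto simp: Delta_iff n_def N_def)
        have "int (T y) = int u" using fill[OF yD] y by simp
        then show "y \<in> Dc u" using yD unfolding Dc_def by simp
      qed
    qed
    moreover have "inj_on (\<lambda>c. (bb \<alpha> c + int u, c)) (C u)" by (auto simp: inj_on_def)
    ultimately show ?thesis by (simp add: card_image)
  qed
  have finDc: "finite (Dc u)" for u
    using fin sub unfolding Dc_def by (auto intro: finite_subset)

  have K: "card (C (w - 1)) \<le> card (C w) + 1 \<and> (card (C (w - 1)) = card (C w) + 1 \<longrightarrow> w \<in> R_set \<alpha> k)"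
    if w2: "2 \<le> w" for w
  proof -
    have CC: "C w \<subseteq> C (w - 1)" using w2 unfolding C_def by auto
    define E where "E = C (w - 1) - C w"
    have cardE: "card (C (w - 1)) = card (C w) + card E"
      unfolding E_def using CC finC by (simp add: card_Diff_subset card_mono)
    have Eeq: "bb \<alpha> c + int w = int N + 1" if "c \<in> E" for c
      using that w2 unfolding E_def C_def by auto
    have Eb: "1 \<le> c \<and> c \<le> int n" if "c \<in> E" for c
      using that unfolding E_def C_def by auto
    have finE: "finite E" unfolding E_def using finC by simp
    have E1: "card E \<le> 1"
    proof -
      have "\<forall>c1\<in>E. \<forall>c2\<in>E. c1 = c2"
      proof (intro ballI)
        fix c1 c2 assume "c1 \<in> E" "c2 \<in> E"
        then have "bb \<alpha> c1 = bb \<alpha> c2" using Eeq[of c1] Eeq[of c2] by simp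
        moreover have "\<not> (c1 < c2)" using bb_strict[of c1 c2 \<alpha>] \<open>c1 \<in> E\<close> \<open>c2 \<in> E\<close> Eb comp
          \<open>bb \<alpha> c1 = bb \<alpha> c2\<close> unfolding n_def by fastforce
        moreover have "\<not> (c2 < c1)" using bb_strict[of c2 c1 \<alpha>] \<open>c1 \<in> E\<close> \<open>c2 \<in> E\<close> Eb comp
          \<open>bb \<alpha> c1 = bb \<alpha> c2\<close> unfolding n_def by fastforce
        ultimately show "c1 = c2" by simp
      qed
      then show ?thesis using finE card_le_Suc0_iff_eq by auto
    qed
    have "w \<in> R_set \<alpha> k" if "card E = 1"
    proof -
      obtain c where cE: "c \<in> E" using \<open>card E = 1\<close> by (metis card_1_singletonE insertI1)
      have c1: "1 \<le> c" "c \<le> int n" using Eb[OF cE] by auto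
      define j where "j = nat c"
      have j: "1 \<le> j" "j \<le> length \<alpha>" using c1 unfolding j_def n_def by auto
      have "N = sum_list (take (length \<alpha> - j) \<alpha>) + sum_list (drop (length \<alpha> - j) \<alpha>)"
        unfolding N_def by (metis append_take_drop_id sum_list_append)
      moreover have "bb \<alpha> c = int (sum_list (take (length \<alpha> - j) \<alpha>))" unfolding bb_def j_def ..
      ultimately have "w = 1 + sum_list (drop (length \<alpha> - j) \<alpha>)" using Eeq[OF cE] by simp
      also have "\<dots> = 1 + (\<Sum>i=1..j. \<alpha> ! (length \<alpha> - i))" using sum_drop_R[OF j(2)] by simp
      finally show ?thesis unfolding R_set_def using j by blast
    qed
    then show ?thesis using cardE E1 by auto
  qed

  have L: "card (Dc w) + card {c. (R0, c) \<in> F \<and> c0 \<le> c \<and> T (R0, c) = w} \<le> card (Dc (w - 1))"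
    if c0F: "(R0, c0) \<in> F" and w: "w = T (R0, c0)" and w2: "2 \<le> w" for c0 w
  proof -
    define S where "S = {c. (R0, c) \<in> F \<and> c0 \<le> c \<and> T (R0, c) = w}"
    define A where "A = {y\<in>D. key y \<le> key (R0, c0) \<and> T y = w - 1}"
    define B where "B = {y\<in>D. key y \<le> key (R0, c0) \<and> T y = Suc (w - 1)}"
    have j1: "1 \<le> w - 1" using w2 by simp
    have AB: "card B \<le> card A" unfolding A_def B_def by (rule lattice_card[OF fin lat' j1])
    have A_sub: "A \<subseteq> Dc (w - 1)"
    proof
      fix y assume y: "y \<in> A"
      obtain r' c' where yrc: "y = (r', c')" by (cases y)
      have yD: "(r', c') \<in> D" and ky: "key (r', c') \<le> key (R0, c0)" and Ty: "T (r', c') = w - 1"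
        using y yrc unfolding A_def by auto
      have "r' < R0 \<or> (r' = R0 \<and> c0 \<le> c')" using ky key_le by blast
      moreover have "\<not> (r' = R0 \<and> c0 \<le> c')"
      proof
        assume h: "r' = R0 \<and> c0 \<le> c'"
        show False
        proof (cases "c0 = c'")
          case True then show ?thesis using Ty w h w2 by simp
        next
          case False
          then have "T (R0, c0) \<le> T (R0, c')" using rowm h yD FD c0F by auto
          then show ?thesis using Ty w h w2 by simp
        qed
      qed
      ultimately have "r' < R0" by blast
      then have "(r', c') \<in> Delta \<alpha>" using low[OF yD] unfolding R0_def N_def by simp
      then show "y \<in> Dc (w - 1)" using Ty yrc unfolding Dc_def by simp
    qed
    define G where "G = (\<lambda>c. (R0, c)) ` S"
    have finS: "finite S"
      by (rule finite_subset[of _ "{c0 .. int (lam ! 0) - int k}"]) (auto simp: S_def Frow)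
    have cardG: "card G = card S" unfolding G_def by (simp add: card_image inj_on_def)
    have B_sup: "Dc w \<union> G \<subseteq> B"
    proof
      fix y assume "y \<in> Dc w \<union> G"
      then show "y \<in> B"
      proof
        assume "y \<in> Dc w"
        then have yD: "y \<in> Delta \<alpha>" and Ty: "T y = w" unfolding Dc_def by auto
        have "fst y < R0" using DeltaN[OF yD] unfolding R0_def by simp
        then have "key y \<le> key (R0, c0)" using key_le[of "fst y" "snd y" R0 c0] by simp
        then show ?thesis using yD sub Ty w2 unfolding B_def by auto
      next
        assume "y \<in> G"
        then obtain c where c: "c \<in> S" and y: "y = (R0, c)" unfolding G_def by auto
        then show ?thesis using FD w2 key_le unfolding B_def S_def by auto
      qed
    qed
    have disj: "Dc w \<inter> G = {}"
    proof -
      have "x \<notin> G" if "x \<in> Dc w" for x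
        using that DeltaN unfolding Dc_def G_def R0_def by fastforce
      then show ?thesis by blast
    qed
    have finB: "finite B" unfolding B_def using fin by simp
    have "card (Dc w) + card S = card (Dc w \<union> G)"
      using disj finDc finS cardG unfolding G_def by (simp add: card_Un_disjoint)
    also have "\<dots> \<le> card B" using B_sup finB by (rule card_mono[rotated])
    also have "\<dots> \<le> card A" by (rule AB)
    also have "\<dots> \<le> card (Dc (w - 1))" using A_sub finDc by (rule card_mono[rotated])
    finally show ?thesis unfolding S_def .
  qed

  have Sfin: "finite {c. (R0, c) \<in> F \<and> P c}" for P
    by (rule finite_subset[of _ "{1 - int k .. int (lam ! 0) - int k}"]) (auto simp: Frow)

  have top: "2 \<le> T (R0, c)" if cF: "(R0, c) \<in> F" and c1: "1 \<le> c" for c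
  proof -
    have lam: "lam \<noteq> []" "c \<le> int (lam ! 0) - int k" using cF Frow by auto
    have cn: "c \<le> int n" using lam bound unfolding n_def by simp
    have "n - nat c < n" using c1 cn by simp
    then have "sum_list (take (n - nat c) \<alpha>) < sum_list (take n \<alpha>)"
      using sum_take_strict[of "n - nat c" n \<alpha>] comp unfolding is_composition_def n_def by simp
    then have "bb \<alpha> c < int N" unfolding bb_def N_def n_def by simp
    then have ND: "(int N, c) \<in> Delta \<alpha>" using c1 cn by (simp add: Delta_iff n_def N_def)
    have "T (int N, c) < T (R0, c)" using colm[of "int N" c R0] ND sub cF FD unfolding R0_def by auto
    moreover have "0 < T (int N, c)" using pos ND sub by auto
    ultimately show ?thesis by simp
  qed

  have part1: "T (R0, c) \<in> R_set \<alpha> k" if cF: "(R0, c) \<in> F" for c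
  proof -
    define w where "w = T (R0, c)"
    have "0 < w" using pos cF FD unfolding w_def by auto
    show ?thesis
    proof (cases "w = 1")
      case True
      have "c < 1" using top[OF cF] True unfolding w_def by force
      then have "0 < k" using cF Frow by auto
      then show ?thesis using True unfolding w_def R_set_def by simp
    next
      case False
      then have w2: "2 \<le> w" using \<open>0 < w\<close> by simp
      have "c \<in> {c'. (R0, c') \<in> F \<and> c \<le> c' \<and> T (R0, c') = w}" using cF w_def by simp
      then have "1 \<le> card {c'. (R0, c') \<in> F \<and> c \<le> c' \<and> T (R0, c') = w}"
        using Sfin[of "\<lambda>c'. c \<le> c' \<and> T (R0, c') = w"] by (metis One_nat_def Suc_leI card_gt_0_iff empty_iff)
      then have "card (C w) + 1 \<le> card (C (w - 1))"
        using L[OF cF w_def w2] cardDC[of w] cardDC[of "w - 1"] w2 by simp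
      then show ?thesis using K[OF w2] unfolding w_def by simp
    qed
  qed

  have part2: "card {c. (R0, c) \<in> F \<and> T (R0, c) = 1} \<le> k"
  proof -
    have "{c. (R0, c) \<in> F \<and> T (R0, c) = 1} \<subseteq> {1 - int k .. 0}"
    proof
      fix c assume c: "c \<in> {c. (R0, c) \<in> F \<and> T (R0, c) = 1}"
      then have "\<not> 1 \<le> c" using top by fastforce
      then show "c \<in> {1 - int k .. 0}" using c Frow by auto
    qed
    then have "card {c. (R0, c) \<in> F \<and> T (R0, c) = 1} \<le> card {1 - int k .. 0}" by (rule card_mono[rotated]) simp
    then show ?thesis by simp
  qed

  have part3: "card {c. (R0, c) \<in> F \<and> T (R0, c) = v} \<le> 1" if v1: "v \<noteq> 1" for v
  proof (cases "v = 0")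
    case True
    then have "{c. (R0, c) \<in> F \<and> T (R0, c) = v} = {}" using pos FD by fastforce
    then have "card {c. (R0, c) \<in> F \<and> T (R0, c) = v} = 0" by (simp only: card.empty)
    then show ?thesis by simp
  next
    case False
    then have v2: "2 \<le> v" using v1 by simp
    have two: False if "(R0, c1) \<in> F" "(R0, c2) \<in> F" "T (R0, c1) = v" "T (R0, c2) = v" "c1 < c2" for c1 c2
    proof -
      have "{c1, c2} \<subseteq> {c. (R0, c) \<in> F \<and> c1 \<le> c \<and> T (R0, c) = v}" using that by auto
      then have "2 \<le> card {c. (R0, c) \<in> F \<and> c1 \<le> c \<and> T (R0, c) = v}"
      proof -
        have "card {c1, c2} = 2" using that(5) by simp
        then show ?thesis using card_mono[OF Sfin[of "\<lambda>c. c1 \<le> c \<and> T (R0, c) = v"] \<open>{c1, c2} \<subseteq> _\<close>] by simp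
      qed
      then have "card (C v) + 2 \<le> card (C (v - 1))"
        using L[OF that(1) that(3)[symmetric] v2] cardDC[of v] cardDC[of "v - 1"] v2 by simp
      then show False using K[OF v2] by simp
    qed
    have "\<forall>a1\<in>{c. (R0, c) \<in> F \<and> T (R0, c) = v}. \<forall>a2\<in>{c. (R0, c) \<in> F \<and> T (R0, c) = v}. a1 = a2"
    proof (intro ballI)
      fix a1 a2 assume a1: "a1 \<in> {c. (R0, c) \<in> F \<and> T (R0, c) = v}" and a2: "a2 \<in> {c. (R0, c) \<in> F \<and> T (R0, c) = v}"
      show "a1 = a2"
      proof (rule ccontr)
        assume "a1 \<noteq> a2"
        then have "a1 < a2 \<or> a2 < a1" by auto
        then show False using two a1 a2 by auto
      qed
    qed
    then have "card {c. (R0, c) \<in> F \<and> T (R0, c) = v} \<le> Suc 0"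
      using card_le_Suc0_iff_eq[OF Sfin[of "\<lambda>c. T (R0, c) = v"]] by blast
    then show ?thesis by simp
  qed

  show ?thesis using part1 part2 part3 unfolding R0_def N_def F_def by simp
qed


end
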